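(* Let $M \geq 1$ and let $f \colon (\mathbb{W},d_{\mathrm{par}}) \to (\mathbb{H},d)$ be an $M$-bilipschitz map. Then for every $\epsilon \in (0,1]$ there exist $C = C(\epsilon,M) \geq 10$ and $\delta = \delta(C,\epsilon,M) > 0$ such that for all $w \in \mathbb{W}$ and $r > 0$: $$\rho_{f}(B(w,Cr)) < \delta \implies \beta_{f}(B(w,r)) < \epsilon.$$
   Context: $\mathbb{H}$ is $\mathbb{R}^{3}$ with group law $(x_{1},y_{1},t_{1}) \cdot (x_{2},y_{2},t_{2}) = (x_{1}+x_{2},y_{1}+y_{2},t_{1}+t_{2}+\tfrac{1}{2}(x_{1}y_{2}-x_{2}y_{1}))$, metric $d(p,q) = \|q^{-1}\cdot p\|$ with $\|(x,y,t)\| = \max\{\sqrt{x^{2}+y^{2}},\sqrt{|t|}\}$, and $N(E,\delta) = \{p : \operatorname{dist}(p,E) \leq \delta\}$. A horizontal line in $\mathbb{H}$ is a set $p \cdot \{(sa,sb,0) : s \in \mathbb{R}\}$ with $p \in \mathbb{H}$, $(a,b) \neq 0$. A vertical plane is a set $\{(x,y,t) : (x,y) \in \lambda, t \in \mathbb{R}\}$ for an affine line $\lambda \subset \mathbb{R}^{2}$. $\mathbb{W}$ is $\mathbb{R}^{2}$ with $d_{\mathrm{par}}((y,t),(\xi,\tau)) = \max\{|y-\xi|,|t-\tau|^{1/2}\}$; horizontal lines in $\mathbb{W}$ are the sets $\mathbb{R} \times \{t\}$; $B(w,r)$ is the closed $d_{\mathrm{par}}$-ball. The ruler coefficient $\rho_{f}(B(w,r))$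 is the infimum of $\rho > 0$ such that for every horizontal line $\ell \subset \mathbb{W}$ there is a horizontal line $L \subset \mathbb{H}$ with $f(\ell \cap B(w,r)) \subset N(L,\rho r)$. For a vertical plane $\mathbb{V}$, $\beta_{f}(\mathbb{V};B(w,r))$ is the infimum of $\epsilon > 0$ such that for every horizontal line $\ell \subset \mathbb{W}$ there is a horizontal line $L \subset \mathbb{V}$ with $f(\ell \cap B(w,r)) \subset N(L,\epsilon r)$; $\beta_{f}(B(w,r)) := \inf_{\mathbb{V}} \beta_{f}(\mathbb{V};B(w,r))$ over all vertical planes. *)

theory Defs
  imports Complex_Main
begin

type_synonym heis = "real \<times> real \<times> real"
type_synonym wpl = "real \<times> real"

definition hmult :: "heis \<Rightarrow> heis \<Rightarrow> heis" where
  "hmult p q = (case p of (x1, y1, t1) \<Rightarrow> case q of (x2, y2, t2) \<Rightarrow>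
     (x1 + x2, y1 + y2, t1 + t2 + (1/2) * (x1 * y2 - x2 * y1)))"

definition hinv :: "heis \<Rightarrow> heis" where
  "hinv p = (case p of (x, y, t) \<Rightarrow> (-x, -y, -t))"

definition hnorm :: "heis \<Rightarrow> real" where
  "hnorm p = (case p of (x, y, t) \<Rightarrow> max (sqrt (x^2 + y^2)) (sqrt \<bar>t\<bar>))"

definition hdist :: "heis \<Rightarrow> heis \<Rightarrow> real" where
  "hdist p q = hnorm (hmult (hinv q) p)"

definition hsetdist :: "heis \<Rightarrow> heis set \<Rightarrow> real" where
  "hsetdist p E = Inf (hdist p ` E)"

definition hnbhd :: "heis set \<Rightarrow> real \<Rightarrow> heis set" where
  "hnbhd E \<delta> = {p. hsetdist p E \<le> \<delta>}"

definition horiz_line_H :: "heis set \<Rightarrow> bool" where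
  "horiz_line_H L \<longleftrightarrow> (\<exists>p a b. (a, b) \<noteq> (0, 0) \<and>
      L = {hmult p (s * a, s * b, 0) | s. s \<in> (UNIV :: real set)})"

definition vertical_plane :: "heis set \<Rightarrow> bool" where
  "vertical_plane V \<longleftrightarrow> (\<exists>x0 y0 u v. (u, v) \<noteq> (0, 0) \<and>
      V = {(x, y, t). (x, y) \<in> {(x0 + s * u, y0 + s * v) | s. s \<in> (UNIV :: real set)}})"

definition dpar :: "wpl \<Rightarrow> wpl \<Rightarrow> real" where
  "dpar w z = (case w of (y, t) \<Rightarrow> case z of (\<xi>, \<tau>) \<Rightarrow> max \<bar>y - \<xi>\<bar> (sqrt \<bar>t - \<tau>\<bar>))"

definition horiz_line_W :: "wpl set \<Rightarrow> bool" where
  "horiz_line_W l \<longleftrightarrow> (\<exists>t. l = UNIV \<times> {t})"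

definition wball :: "wpl \<Rightarrow> real \<Rightarrow> wpl set" where
  "wball w r = {z. dpar w z \<le> r}"

definition bilipschitz :: "real \<Rightarrow> (wpl \<Rightarrow> heis) \<Rightarrow> bool" where
  "bilipschitz M f \<longleftrightarrow> (\<forall>a b. dpar a b / M \<le> hdist (f a) (f b) \<and> hdist (f a) (f b) \<le> M * dpar a b)"

definition ruler_coeff :: "(wpl \<Rightarrow> heis) \<Rightarrow> wpl \<Rightarrow> real \<Rightarrow> real" where
  "ruler_coeff f w r = Inf {\<rho>. \<rho> > 0 \<and> (\<forall>l. horiz_line_W l \<longrightarrow>
      (\<exists>L. horiz_line_H L \<and> f ` (l \<inter> wball w r) \<subseteq> hnbhd L (\<rho> * r)))}"

definition beta_plane :: "(wpl \<Rightarrow> heis) \<Rightarrow> heis set \<Rightarrow> wpl \<Rightarrow> real \<Rightarrow> real" where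
  "beta_plane f V w r = Inf {\<epsilon>. \<epsilon> > 0 \<and> (\<forall>l. horiz_line_W l \<longrightarrow>
      (\<exists>L. horiz_line_H L \<and> L \<subseteq> V \<and> f ` (l \<inter> wball w r) \<subseteq> hnbhd L (\<epsilon> * r)))}"

definition beta :: "(wpl \<Rightarrow> heis) \<Rightarrow> wpl \<Rightarrow> real \<Rightarrow> real" where
  "beta f w r = Inf {beta_plane f V w r | V. vertical_plane V}"

end

theory Submission
  imports Defs
begin


lemma hmult_simp: "hmult (x1,y1,t1) (x2,y2,t2) = (x1+x2, y1+y2, t1+t2+(1/2)*(x1*y2 - x2*y1))"
  by (simp add: hmult_def)
lemma hinv_simp: "hinv (x,y,t) = (-x,-y,-t)" by (simp add: hinv_def)
lemma hnorm_simp: "hnorm (x,y,t) = max (sqrt (x^2+y^2)) (sqrt \<bar>t\<bar>)" by (simp add: hnorm_def)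
lemma hdist_simp: "hdist (x1,y1,t1) (x2,y2,t2) = hnorm (x1 - x2, y1 - y2, t1 - t2 + (1/2)*(x1*y2 - x2*y1))"
  by (simp add: hdist_def hmult_simp hinv_simp algebra_simps)

lemma sqrt_le_iff2: assumes a: "0 \<le> a" shows "sqrt a \<le> c \<longleftrightarrow> (0 \<le> c \<and> a \<le> c^2)"
proof
  assume c: "sqrt a \<le> c"
  show "0 \<le> c \<and> a \<le> c^2" using order_trans[OF real_sqrt_ge_zero[OF a] c] sqrt_le_D[OF c] by simp
next
  assume h: "0 \<le> c \<and> a \<le> c^2"
  have "sqrt a \<le> sqrt (c^2)" using real_sqrt_le_mono h by blast
  also have "sqrt (c^2) = c" using h by simp
  finally show "sqrt a \<le> c" .
qed

lemma hnorm_le: "hnorm (x,y,t) \<le> c \<longleftrightarrow> (0 \<le> c \<and> x^2+y^2 \<le> c^2 \<and> \<bar>t\<bar> \<le> c^2)"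
  by (auto simp add: hnorm_simp sqrt_le_iff2)

lemma hnorm_nonneg: "0 \<le> hnorm p"
  by (cases p) (auto simp: hnorm_simp le_max_iff_disj)

lemma hnorm_sq: "hnorm (x,y,t) = c \<Longrightarrow> x^2+y^2 \<le> c^2 \<and> \<bar>t\<bar> \<le> c^2"
  using hnorm_le by (metis order_refl)

lemma abs_le_of_sq: assumes "x^2 \<le> c^2" "0 \<le> c" shows "\<bar>x\<bar> \<le> (c::real)"
  using power2_le_iff_abs_le[OF assms(2), of x] assms(1) by simp

lemma hnorm_x: "\<bar>x\<bar> \<le> hnorm (x,y,t)"
proof -
  obtain c where c: "hnorm (x,y,t) = c" by simp
  then have "x^2 \<le> c^2" "0 \<le> c" using hnorm_sq[OF c] hnorm_nonneg[of "(x,y,t)"] by (auto intro: order_trans[of _ "x^2+y^2"])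
  then show ?thesis using c abs_le_of_sq by blast
qed

lemma hnorm_y: "\<bar>y\<bar> \<le> hnorm (x,y,t)"
proof -
  obtain c where c: "hnorm (x,y,t) = c" by simp
  then have "y^2 \<le> c^2" "0 \<le> c" using hnorm_sq[OF c] hnorm_nonneg[of "(x,y,t)"] by (auto intro: order_trans[of _ "x^2+y^2"])
  then show ?thesis using c abs_le_of_sq by blast
qed

lemma cs2: "(a::real)^2 + b^2 \<le> A^2 \<Longrightarrow> c^2 + d^2 \<le> B^2 \<Longrightarrow> 0 \<le> A \<Longrightarrow> 0 \<le> B \<Longrightarrow>
   \<bar>a*c + b*d\<bar> \<le> A*B \<and> \<bar>a*d - c*b\<bar> \<le> A*B"
proof -
  assume h: "a^2 + b^2 \<le> A^2" "c^2 + d^2 \<le> B^2" "0 \<le> A" "0 \<le> B"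
  have p: "(a^2+b^2)*(c^2+d^2) \<le> A^2*B^2" using h by (simp add: mult_mono)
  have id: "(a^2+b^2)*(c^2+d^2) = (a*c+b*d)^2 + (a*d-c*b)^2"
    by (simp add: power2_eq_square algebra_simps)
  have "(a*c+b*d)^2 \<le> (A*B)^2" "(a*d-c*b)^2 \<le> (A*B)^2"
  proof -
    have "(A*B)^2 = A^2*B^2" by (simp add: power_mult_distrib)
    moreover have "0 \<le> (a*d-c*b)^2" "0 \<le> (a*c+b*d)^2" by simp_all
    ultimately show "(a*c+b*d)^2 \<le> (A*B)^2" "(a*d-c*b)^2 \<le> (A*B)^2" using p id by linarith+
  qed
  then show ?thesis using h by (simp add: abs_le_of_sq)
qed

lemma hnorm_triangle: "hnorm (hmult p q) \<le> hnorm p + hnorm q"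
proof -
  obtain x1 y1 t1 where p: "p = (x1,y1,t1)" by (cases p) auto
  obtain x2 y2 t2 where q: "q = (x2,y2,t2)" by (cases q) auto
  define a where "a = hnorm p"
  define b where "b = hnorm q"
  have a0: "0 \<le> a" "0 \<le> b" using hnorm_nonneg a_def b_def by auto
  have ha: "x1^2+y1^2 \<le> a^2" "\<bar>t1\<bar> \<le> a^2" using hnorm_sq a_def p by auto
  have hb: "x2^2+y2^2 \<le> b^2" "\<bar>t2\<bar> \<le> b^2" using hnorm_sq b_def q by auto
  from cs2[OF ha(1) hb(1) a0] have c: "\<bar>x1*x2 + y1*y2\<bar> \<le> a*b" "\<bar>x1*y2 - x2*y1\<bar> \<le> a*b" by auto
  have "(x1+x2)^2 + (y1+y2)^2 = (x1^2+y1^2) + (x2^2+y2^2) + 2*(x1*x2+y1*y2)"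
    by (simp add: power2_eq_square algebra_simps)
  also have "\<dots> \<le> (a+b)^2"
  proof -
    have "x1*x2+y1*y2 \<le> a*b" using c(1) abs_le_D1 by blast
    moreover have "(a+b)^2 = a^2+b^2+2*(a*b)" by (simp add: power2_eq_square algebra_simps)
    ultimately show ?thesis using add_mono[OF add_mono[OF ha(1) hb(1)], of "2*(x1*x2+y1*y2)" "2*(a*b)"] by simp
  qed
  finally have 1: "(x1+x2)^2 + (y1+y2)^2 \<le> (a+b)^2" .
  have "\<bar>t1+t2+(1/2)*(x1*y2 - x2*y1)\<bar> \<le> a^2 + b^2 + a*b" 
  proof -
    have "\<bar>t1+t2+(1/2)*(x1*y2 - x2*y1)\<bar> \<le> \<bar>t1\<bar> + \<bar>t2\<bar> + (1/2)*\<bar>x1*y2 - x2*y1\<bar>"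
      using abs_triangle_ineq[of "t1+t2" "(1/2)*(x1*y2 - x2*y1)"] abs_triangle_ineq[of t1 t2]
      by (simp add: abs_mult)
    also have "\<dots> \<le> a^2 + b^2 + 1/2*(a*b)"
      using add_mono[OF add_mono[OF ha(2) hb(2)] mult_left_mono[OF c(2), of "1/2"]] by simp
    also have "\<dots> \<le> a^2 + b^2 + a*b" using mult_nonneg_nonneg[OF a0] by simp
    finally show ?thesis .
  qed
  also have "\<dots> \<le> (a+b)^2" using a0 by (simp add: power2_eq_square algebra_simps)
  finally have 2: "\<bar>t1+t2+(1/2)*(x1*y2 - x2*y1)\<bar> \<le> (a+b)^2" .
  have e: "hmult p q = (x1+x2, y1+y2, t1+t2+(1/2)*(x1*y2 - x2*y1))" by (simp add: p q hmult_simp)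
  have "hnorm (x1+x2, y1+y2, t1+t2+(1/2)*(x1*y2 - x2*y1)) \<le> a + b"
    unfolding hnorm_le using 1 2 a0 by simp
  then show ?thesis using e a_def b_def by simp
qed

lemma hinv_hmult: "hmult (hinv r) p = hmult (hmult (hinv r) q) (hmult (hinv q) p)"
  by (cases p, cases q, cases r) (simp add: hmult_simp hinv_simp algebra_simps)

lemma hdist_triangle: "hdist p r \<le> hdist p q + hdist q r"
  unfolding hdist_def by (metis hinv_hmult hnorm_triangle add.commute)

lemma hnorm_hinv: "hnorm (hinv p) = hnorm p"
  by (cases p) (simp add: hinv_simp hnorm_simp)

lemma hdist_sym: "hdist p q = hdist q p"
proof -
  have "hmult (hinv p) q = hinv (hmult (hinv q) p)"
    by (cases p, cases q) (simp add: hmult_simp hinv_simp algebra_simps)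
  then show ?thesis unfolding hdist_def by (simp add: hnorm_hinv)
qed

lemma hdist_nonneg: "0 \<le> hdist p q" by (simp add: hdist_def hnorm_nonneg)



lemma horiz_line_dist:
  assumes "horiz_line_H B" "q \<in> B" "q' \<in> B"
  shows "hdist q q' \<le> \<bar>fst q - fst q'\<bar> + \<bar>fst (snd q) - fst (snd q')\<bar>"
proof -
  obtain p u v where B: "(u,v) \<noteq> (0,0)" "B = {hmult p (s * u, s * v, 0) | s. s \<in> (UNIV :: real set)}"
    using assms(1) unfolding horiz_line_H_def by blast
  obtain p1 p2 p3 where p: "p = (p1,p2,p3)" by (cases p) auto
  obtain s s' where q: "q = hmult p (s * u, s * v, 0)" and q': "q' = hmult p (s' * u, s' * v, 0)"
    using assms(2,3) B by blast
  define dx where "dx = (s - s') * u"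
  define dy where "dy = (s - s') * v"
  have e: "hdist q q' = hnorm (dx, dy, 0)"
    unfolding q q' p dx_def dy_def by (simp add: hmult_simp hdist_simp algebra_simps)
  have fx: "fst q - fst q' = dx" "fst (snd q) - fst (snd q') = dy"
    unfolding q q' p dx_def dy_def by (simp_all add: hmult_simp algebra_simps)
  have "dx^2 + dy^2 \<le> (\<bar>dx\<bar> + \<bar>dy\<bar>)^2"
    by (simp add: power2_eq_square algebra_simps)
  then have "hnorm (dx, dy, 0) \<le> \<bar>dx\<bar> + \<bar>dy\<bar>" by (simp add: hnorm_le)
  then show ?thesis using e fx by simp
qed

lemma horiz_line_eq:
  assumes "horiz_line_H B" "q \<in> B" "q' \<in> B" "fst q \<noteq> fst q'"
  shows "\<exists>m k \<alpha>. \<forall>z\<in>B. fst (snd z) = m * fst z + k \<and> snd (snd z) = \<alpha> - k * fst z / 2"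
proof -
  obtain p u v where B: "(u,v) \<noteq> (0,0)" "B = {hmult p (s * u, s * v, 0) | s. s \<in> (UNIV :: real set)}"
    using assms(1) unfolding horiz_line_H_def by blast
  obtain p1 p2 p3 where p: "p = (p1,p2,p3)" by (cases p) auto
  obtain s s' where q: "q = hmult p (s * u, s * v, 0)" and q': "q' = hmult p (s' * u, s' * v, 0)"
    using assms(2,3) B by blast
  have u: "u \<noteq> 0" using assms(4) unfolding q q' p by (auto simp: hmult_simp)
  define m where "m = v / u"
  define k where "k = p2 - p1 * v / u"
  define \<alpha> where "\<alpha> = p3 + p1 * k / 2"
  have "\<forall>z\<in>B. fst (snd z) = m * fst z + k \<and> snd (snd z) = \<alpha> - k * fst z / 2"
  proof
    fix z assume "z \<in> B"
    then obtain t where z: "z = hmult p (t * u, t * v, 0)" using B by blast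
    show "fst (snd z) = m * fst z + k \<and> snd (snd z) = \<alpha> - k * fst z / 2"
      unfolding z p m_def k_def \<alpha>_def using u by (simp add: hmult_simp field_simps)
  qed
  then show ?thesis by blast
qed

lemma near_axis:
  assumes "hdist (x,y,t) (s,0,0) \<le> D"
  shows "\<bar>y\<bar> \<le> D \<and> \<bar>t - x*y/2\<bar> \<le> 2 * D^2"
proof -
  have e: "hdist (x,y,t) (s,0,0) = hnorm (x - s, y, t - s*y/2)" by (simp add: hdist_simp)
  have h: "hnorm (x - s, y, t - s*y/2) \<le> D" using assms unfolding e .
  then have h1: "(x-s)^2 + y^2 \<le> D^2" "\<bar>t - s*y/2\<bar> \<le> D^2" "0 \<le> D" by (simp_all add: hnorm_le)
  have "y^2 \<le> D^2" "(x-s)^2 \<le> D^2" using h1 zero_le_power2[of y] zero_le_power2[of "x-s"] by linarith+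
  then have a: "\<bar>y\<bar> \<le> D" "\<bar>x-s\<bar> \<le> D" using h1 abs_le_of_sq by blast+
  have "\<bar>(x-s)*y\<bar> \<le> D*D" unfolding abs_mult using a by (simp add: mult_mono)
  moreover have "t - x*y/2 = (t - s*y/2) - (x-s)*y/2" by (simp add: field_simps)
  ultimately show ?thesis using a h1 by (simp add: power2_eq_square)
qed

lemma quad_bound:
  fixes m k \<alpha> X1 X2 X3 E S U :: real
  assumes S: "S > 0" and d: "\<bar>X1 - X2\<bar> \<ge> S" "\<bar>X2 - X3\<bar> \<ge> S" "\<bar>X3 - X1\<bar> \<ge> S"
    and p: "\<bar>\<alpha> - k*X1 - m*X1^2/2\<bar> \<le> E" "\<bar>\<alpha> - k*X2 - m*X2^2/2\<bar> \<le> E" "\<bar>\<alpha> - k*X3 - m*X3^2/2\<bar> \<le> E"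
    and U: "\<bar>X1\<bar> \<le> U" "\<bar>X2\<bar> \<le> U"
  shows "\<bar>m\<bar> * S^2 \<le> 6 * E" "\<bar>k\<bar> \<le> 2 * E / S + \<bar>m\<bar> * U"
proof -
  define a where "a = \<bar>X1 - X2\<bar>"
  define b where "b = \<bar>X2 - X3\<bar>"
  define c where "c = \<bar>X3 - X1\<bar>"
  define \<psi>1 where "\<psi>1 = \<alpha> - k*X1 - m*X1^2/2"
  define \<psi>2 where "\<psi>2 = \<alpha> - k*X2 - m*X2^2/2"
  define \<psi>3 where "\<psi>3 = \<alpha> - k*X3 - m*X3^2/2"
  have id: "\<psi>1*(X2 - X3) + \<psi>2*(X3 - X1) + \<psi>3*(X1 - X2) = (m/2)*((X1-X2)*(X2-X3)*(X3-X1))"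
    unfolding \<psi>1_def \<psi>2_def \<psi>3_def by (simp add: power2_eq_square field_simps)
  have "\<bar>\<psi>1*(X2 - X3) + \<psi>2*(X3 - X1) + \<psi>3*(X1 - X2)\<bar> \<le> E*b + E*c + E*a"
  proof -
    have "\<bar>\<psi>1*(X2 - X3)\<bar> \<le> E*b" unfolding abs_mult b_def using p(1) \<psi>1_def by (simp add: mult_right_mono)
    moreover have "\<bar>\<psi>2*(X3 - X1)\<bar> \<le> E*c" unfolding abs_mult c_def using p(2) \<psi>2_def by (simp add: mult_right_mono)
    moreover have "\<bar>\<psi>3*(X1 - X2)\<bar> \<le> E*a" unfolding abs_mult a_def using p(3) \<psi>3_def by (simp add: mult_right_mono)
    ultimately show ?thesis by (smt (verit) abs_triangle_ineq)
  qed
  then have "\<bar>(m/2)*((X1-X2)*(X2-X3)*(X3-X1))\<bar> \<le> E*b + E*c + E*a" using id by simp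
  moreover have "\<bar>(m/2)*((X1-X2)*(X2-X3)*(X3-X1))\<bar> = \<bar>m\<bar> * (a*b*c) / 2"
    unfolding a_def b_def c_def by (simp add: abs_mult)
  ultimately have main: "\<bar>m\<bar> * (a*b*c) \<le> 2*E*(a+b+c)" by (simp add: algebra_simps)
  have pos: "a \<ge> S" "b \<ge> S" "c \<ge> S" using d a_def b_def c_def by auto
  have "S^2 * a \<le> a*b*c" "S^2 * b \<le> a*b*c" "S^2 * c \<le> a*b*c"
  proof -
    have "S*S \<le> b*c" "S*S \<le> a*c" "S*S \<le> a*b" using pos S by (simp_all add: mult_mono)
    then show "S^2 * a \<le> a*b*c" "S^2 * b \<le> a*b*c" "S^2 * c \<le> a*b*c"
      using pos S by (simp_all add: power2_eq_square mult_right_mono algebra_simps)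
  qed
  then have "S^2 * (a+b+c) \<le> 3*(a*b*c)" by (simp add: algebra_simps)
  then have "\<bar>m\<bar> * (S^2 * (a+b+c)) \<le> \<bar>m\<bar> * (3*(a*b*c))" by (simp add: mult_left_mono)
  also have "\<dots> \<le> 3 * (2*E*(a+b+c))" using main by (simp add: algebra_simps)
  finally have "(\<bar>m\<bar> * S^2) * (a+b+c) \<le> (6 * E) * (a+b+c)" by (simp add: algebra_simps)
  moreover have "a+b+c > 0" using pos S by simp
  ultimately show m: "\<bar>m\<bar> * S^2 \<le> 6 * E" by simp
  have id2: "\<psi>2 - \<psi>1 = -(X2 - X1) * (k + m*(X1+X2)/2)"
    unfolding \<psi>1_def \<psi>2_def by (simp add: power2_eq_square field_simps)
  have "\<bar>\<psi>2 - \<psi>1\<bar> \<le> 2*E" using p(1,2) \<psi>1_def \<psi>2_def by simp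
  then have "a * \<bar>k + m*(X1+X2)/2\<bar> \<le> 2*E" using id2 a_def by (simp add: abs_mult abs_minus_commute)
  then have "S * \<bar>k + m*(X1+X2)/2\<bar> \<le> 2*E" using pos by (meson abs_ge_zero mult_right_mono order.trans)
  then have k1: "\<bar>k + m*(X1+X2)/2\<bar> \<le> 2*E/S" using S by (simp add: field_simps)
  have "\<bar>m*(X1+X2)/2\<bar> \<le> \<bar>m\<bar> * U"
  proof -
    have "\<bar>X1+X2\<bar>/2 \<le> U" using U by simp
    from mult_left_mono[OF this abs_ge_zero[of m]] show ?thesis by (simp add: abs_mult)
  qed
  then show "\<bar>k\<bar> \<le> 2 * E / S + \<bar>m\<bar> * U" using k1 by linarith
qed



lemma numeric:
  fixes M \<epsilon> N m k x d \<sigma> \<mu> :: real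
  assumes M1: "1 \<le> M" and e0: "0 < \<epsilon>" and e1: "\<epsilon> \<le> 1" and N: "N = 20000 * M^6 / \<epsilon>^2"
    and d: "d = 2/N + M" and \<sigma>: "\<sigma> = N/M - 6/N - 2*M" and \<mu>: "\<mu> = 2/N + M*N"
    and hm: "\<bar>m\<bar> * \<sigma>^2 \<le> 12 * d^2"
    and hk: "\<bar>k\<bar> \<le> 4 * d^2 / \<sigma> + \<bar>m\<bar> * \<mu>"
    and hx: "\<bar>x\<bar> \<le> 2/N + M"
  shows "\<bar>m * x + k\<bar> \<le> \<epsilon>/4" "\<bar>k * x + m * x^2 / 2\<bar> \<le> (\<epsilon>/4)^2"
proof -
  have M0: "0 < M" using M1 by simp
  have M6: "1 \<le> M^6" using M1 by simp
  have e2: "\<epsilon>^2 \<le> 1" "0 < \<epsilon>^2" using e0 e1 by (simp_all add: power_le_one)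
  have e2e: "\<epsilon>^2 \<le> \<epsilon>" using e0 e1 by (simp add: power2_eq_square mult_left_le)
  have NM: "N \<ge> 20000 * M^6" unfolding N using e2 M6
    by (simp add: divide_simps) (simp add: mult_left_le)
  have N0: "N > 0" using NM M6 by linarith
  define \<theta> where "\<theta> = M^6 / N"
  have th: "\<theta> = \<epsilon>^2 / 20000" unfolding \<theta>_def N using M6 e2 M0 by (simp add: field_simps)
  have Mp: "M^2 \<le> M^6" "M^3 \<le> M^5" "M^4 \<le> M^6" "M^5 \<le> M^6"
    using M1 by (simp_all add: power_increasing)
  have Mp1: "M \<le> M^2" using power_increasing[of 1 2 M] M1 by simp
  have Mp2: "M^2 \<ge> 1" using M1 by simp
  have N2: "N \<ge> 20000" using NM M6 by linarith
  have MN: "N \<le> M*N" using mult_right_mono[OF M1, of N] N0 by simp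
  have MN2: "2 \<le> M*N" "6 \<le> M*N" using MN N2 by linarith+
  have invN: "2/N \<le> M" "6/N \<le> M" using N0 MN2 by (simp_all add: divide_simps)
  have dM: "d \<le> 2*M" "0 \<le> d" using d invN N0 M0 by simp_all
  have NM2: "N \<ge> 6 * M^2" using NM Mp M6 by linarith
  have "N/(2*M) \<ge> 3*M" using NM2 M0 by (simp add: divide_simps power2_eq_square)
  moreover have "N/M = 2*(N/(2*M))" by simp
  ultimately have sig: "\<sigma> \<ge> N/(2*M)" unfolding \<sigma> using invN by linarith
  have sig0: "N/(2*M) > 0" using N0 M0 by simp
  have "\<bar>m\<bar> * (N/(2*M))^2 \<le> \<bar>m\<bar> * \<sigma>^2"
    by (intro mult_left_mono power_mono) (use sig sig0 in auto)
  also have "\<dots> \<le> 12 * d^2" by (rule hm)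
  also have "\<dots> \<le> 12 * (2*M)^2" using power_mono[OF dM(1) dM(2), of 2] by simp
  finally have "\<bar>m\<bar> * (N/(2*M))^2 \<le> 12 * (2*M)^2" .
  then have mN0: "\<bar>m\<bar> * (N/(2*M))^2 \<le> 48 * M^2" by (simp add: power2_eq_square)
  have "\<bar>m\<bar> * N^2 = (4*M^2) * (\<bar>m\<bar> * (N/(2*M))^2)" using M0 by (simp add: field_simps power2_eq_square)
  also have "\<dots> \<le> (4*M^2) * (48 * M^2)" using mN0 by (intro mult_left_mono) simp_all
  finally have mN: "\<bar>m\<bar> * N^2 \<le> 192 * M^4" by (simp add: power2_eq_square power4_eq_xxxx)
  have mN1: "\<bar>m\<bar> * N \<le> 192 * M^4 / N" using mN N0 by (simp add: field_simps power2_eq_square)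
  have N1: "1 \<le> N" using N2 by simp
  have "\<bar>m\<bar> * N \<le> \<bar>m\<bar> * N^2" using N1 by (simp add: power2_eq_square mult_left_mono)
  then have mN2: "\<bar>m\<bar> * N \<le> 192 * M^4" using mN by linarith
  have t1: "4 * d^2 / \<sigma> \<le> 32 * M^3 / N"
  proof -
    have "4 * d^2 / \<sigma> \<le> 4 * (2*M)^2 / \<sigma>"
      using power_mono[OF dM(1) dM(2), of 2] sig sig0 by (intro divide_right_mono) simp_all
    also have "\<dots> \<le> 4 * (2*M)^2 / (N/(2*M))"
    proof (rule divide_left_mono)
      show "0 < \<sigma> * (N/(2*M))" using sig sig0 by (intro mult_pos_pos) simp_all
    qed (use sig in simp_all)
    also have "\<dots> = 32 * M^3 / N" using M0 N0 by (simp add: field_simps power2_eq_square power3_eq_cube)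
    finally show ?thesis .
  qed
  have t2: "\<bar>m\<bar> * \<mu> \<le> 384 * M^5 / N"
  proof -
    have "M*1 \<le> M*N" using mult_left_mono[OF N1, of M] M0 by simp
    then have "2/N \<le> M*N" using invN by linarith
    then have "\<mu> \<le> 2*M*N" unfolding \<mu> by simp
    then have "\<bar>m\<bar> * \<mu> \<le> \<bar>m\<bar> * (2*M*N)" by (simp add: mult_left_mono)
    also have "\<dots> = 2*M*(\<bar>m\<bar> * N)" by simp
    also have "\<dots> \<le> 2*M*(192 * M^4 / N)" using mN1 M0 by (intro mult_left_mono) simp_all
    also have "\<dots> = 384 * M^5 / N" by (simp add: eval_nat_numeral algebra_simps)
    finally show ?thesis .
  qed
  have "32 * M^3 / N \<le> 32 * M^5 / N" using Mp N0 by (simp add: divide_simps)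
  then have kb: "\<bar>k\<bar> \<le> 416 * M^5 / N" using hk t1 t2 by linarith
  then have kN: "\<bar>k\<bar> * N \<le> 416 * M^5" using N0 by (simp add: field_simps)
  have x2: "\<bar>x\<bar> \<le> 2*M" using hx invN by linarith
  have th6: "M^6 = \<theta> * N" unfolding \<theta>_def using N0 by simp
  have g1: "\<bar>m * x + k\<bar> * N \<le> 800 * M^6"
  proof -
    have "\<bar>m * x + k\<bar> \<le> \<bar>m\<bar> * (2*M) + \<bar>k\<bar>"
      using abs_triangle_ineq[of "m*x" k] mult_left_mono[OF x2 abs_ge_zero[of m]] by (simp add: abs_mult)
    then have "\<bar>m * x + k\<bar> * N \<le> (\<bar>m\<bar> * (2*M) + \<bar>k\<bar>) * N" using N0 by (simp add: mult_right_mono)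
    also have "\<dots> = 2*M*(\<bar>m\<bar> * N) + \<bar>k\<bar> * N" by (simp add: algebra_simps)
    also have "\<dots> \<le> 2*M*(192 * M^4) + 416 * M^5" using mN2 kN M0 by (intro add_mono mult_left_mono) simp_all
    also have "\<dots> = 800 * M^5" by (simp add: eval_nat_numeral algebra_simps)
    also have "\<dots> \<le> 800 * M^6" using Mp by simp
    finally show ?thesis .
  qed
  then have "\<bar>m * x + k\<bar> * N \<le> (800 * \<theta>) * N" using th6 by simp
  then have "\<bar>m * x + k\<bar> \<le> 800 * \<theta>" using N0 by simp
  then show "\<bar>m * x + k\<bar> \<le> \<epsilon>/4" using th e2e e2 by linarith
  have g2: "\<bar>k * x + m * x^2 / 2\<bar> * N \<le> 1216 * M^6"
  proof -
    have xx: "x^2 \<le> (2*M)^2" using power_mono[OF x2 abs_ge_zero, of 2] by simp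
    have "\<bar>k * x + m * x^2 / 2\<bar> \<le> \<bar>k\<bar> * (2*M) + \<bar>m\<bar> * (2*M)^2 / 2"
      using abs_triangle_ineq[of "k*x" "m*x^2/2"] mult_left_mono[OF x2 abs_ge_zero[of k]]
        mult_left_mono[OF xx abs_ge_zero[of m]] by (simp add: abs_mult)
    then have "\<bar>k * x + m * x^2 / 2\<bar> * N \<le> (\<bar>k\<bar> * (2*M) + \<bar>m\<bar> * (2*M)^2 / 2) * N" using N0 by (simp add: mult_right_mono)
    also have "\<dots> = 2*M*(\<bar>k\<bar> * N) + 2*M^2*(\<bar>m\<bar> * N)" by (simp add: algebra_simps power2_eq_square)
    also have "\<dots> \<le> 2*M*(416 * M^5) + 2*M^2*(192 * M^4)" using mN2 kN M0 by (intro add_mono mult_left_mono) simp_all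
    also have "\<dots> = 1216 * M^6" by (simp add: eval_nat_numeral algebra_simps)
    finally show ?thesis .
  qed
  then have "\<bar>k * x + m * x^2 / 2\<bar> * N \<le> (1216 * \<theta>) * N" using th6 by simp
  then have "\<bar>k * x + m * x^2 / 2\<bar> \<le> 1216 * \<theta>" using N0 by simp
  also have "1216 * \<theta> \<le> (\<epsilon>/4)^2"
  proof -
    have "(\<epsilon>/4)^2 = \<epsilon>^2/16" by (simp add: power_divide)
    then show ?thesis using th e2(2) by linarith
  qed
  finally show "\<bar>k * x + m * x^2 / 2\<bar> \<le> (\<epsilon>/4)^2" .
qed



definition rot :: "real \<Rightarrow> real \<Rightarrow> heis \<Rightarrow> heis" where
  "rot u1 u2 p = (case p of (a,b,c) \<Rightarrow> (a*u1 + b*u2, b*u1 - a*u2, c))"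
definition rotinv :: "real \<Rightarrow> real \<Rightarrow> heis \<Rightarrow> heis" where
  "rotinv u1 u2 p = (case p of (a,b,c) \<Rightarrow> (a*u1 - b*u2, a*u2 + b*u1, c))"
definition phi :: "heis \<Rightarrow> real \<Rightarrow> real \<Rightarrow> heis \<Rightarrow> heis" where
  "phi P u1 u2 q = rot u1 u2 (hmult (hinv P) q)"
definition psi :: "heis \<Rightarrow> real \<Rightarrow> real \<Rightarrow> heis \<Rightarrow> heis" where
  "psi P u1 u2 x = hmult P (rotinv u1 u2 x)"

lemma rot_simp: "rot u1 u2 (a,b,c) = (a*u1 + b*u2, b*u1 - a*u2, c)" by (simp add: rot_def)
lemma rotinv_simp: "rotinv u1 u2 (a,b,c) = (a*u1 - b*u2, a*u2 + b*u1, c)" by (simp add: rotinv_def)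

lemma rot_rotinv: assumes "u1^2 + u2^2 = 1" shows "rot u1 u2 (rotinv u1 u2 x) = x"
proof -
  obtain a b c where x: "x = (a,b,c)" by (cases x) auto
  have "a*u1*u1 - b*u2*u1 + (a*u2 + b*u1)*u2 = a * (u1^2+u2^2)" by (simp add: power2_eq_square algebra_simps)
  moreover have "(a*u2 + b*u1)*u1 - (a*u1 - b*u2)*u2 = b * (u1^2+u2^2)" by (simp add: power2_eq_square algebra_simps)
  ultimately show ?thesis unfolding x using assms by (simp add: rot_simp rotinv_simp algebra_simps)
qed

lemma hmult_left_inv: "hmult (hinv P) (hmult P x) = x"
  by (cases P, cases x) (simp add: hmult_simp hinv_simp field_simps)

lemma phi_psi: assumes "u1^2 + u2^2 = 1" shows "phi P u1 u2 (psi P u1 u2 x) = x"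
  unfolding phi_def psi_def hmult_left_inv using rot_rotinv[OF assms] .

lemma hdist_left: "hdist (hmult g p) (hmult g q) = hdist p q"
  unfolding hdist_def by (cases g, cases p, cases q) (simp add: hmult_simp hinv_simp algebra_simps)

lemma hdist_rot: assumes u: "u1^2 + u2^2 = 1" shows "hdist (rot u1 u2 p) (rot u1 u2 q) = hdist p q"
proof -
  obtain a b c where p: "p = (a,b,c)" by (cases p) auto
  obtain a' b' c' where q: "q = (a',b',c')" by (cases q) auto
  have e1: "((a*u1 + b*u2) - (a'*u1 + b'*u2))^2 + ((b*u1 - a*u2) - (b'*u1 - a'*u2))^2 = ((a-a')^2 + (b-b')^2) * (u1^2+u2^2)"
    by (simp add: power2_eq_square algebra_simps)
  have e2: "(a*u1 + b*u2) * (b'*u1 - a'*u2) - (a'*u1 + b'*u2) * (b*u1 - a*u2) = (a*b' - a'*b) * (u1^2+u2^2)"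
    by (simp add: power2_eq_square algebra_simps)
  show ?thesis unfolding p q rot_simp hdist_simp hnorm_simp e1 e2 u by simp
qed

lemma hdist_phi: assumes "u1^2 + u2^2 = 1" shows "hdist (phi P u1 u2 p) (phi P u1 u2 q) = hdist p q"
  unfolding phi_def hdist_rot[OF assms] by (metis hdist_left hmult_left_inv hinv_hmult)

lemma phi_P: "phi P u1 u2 P = (0,0,0)"
  by (cases P) (simp add: phi_def hmult_simp hinv_simp rot_simp)

lemma hnorm_hdist0: "hnorm p = hdist p (0,0,0)"
  by (cases p) (simp add: hdist_simp)

lemma phi_hmult: assumes u: "u1^2 + u2^2 = 1"
  shows "phi P u1 u2 (hmult Q (s*a, s*b, 0)) = hmult (phi P u1 u2 Q) (s*(a*u1 + b*u2), s*(b*u1 - a*u2), 0)"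
proof -
  obtain p1 p2 p3 where P: "P = (p1,p2,p3)" by (cases P) auto
  obtain q1 q2 q3 where Q: "Q = (q1,q2,q3)" by (cases Q) auto
  have key: "(q1 - p1) * (s * b) - s * a * (q2 - p2) =
     ((q1 - p1) * u1 + (q2 - p2) * u2) * (s * (b * u1 - a * u2)) - s * (a * u1 + b * u2) * ((q2 - p2) * u1 - (q1 - p1) * u2)"
  proof -
    have "((q1 - p1) * u1 + (q2 - p2) * u2) * (s * (b * u1 - a * u2)) - s * (a * u1 + b * u2) * ((q2 - p2) * u1 - (q1 - p1) * u2)
       = ((q1 - p1) * (s * b) - s * a * (q2 - p2)) * (u1^2+u2^2)" by (simp add: power2_eq_square algebra_simps)
    then show ?thesis using u by simp
  qed
  show ?thesis unfolding P Q phi_def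
    by (simp add: hmult_simp hinv_simp rot_simp algebra_simps) (use key in \<open>simp add: algebra_simps\<close>)
qed

lemma phi_line: assumes u: "u1^2 + u2^2 = 1" and B: "horiz_line_H B"
  shows "horiz_line_H (phi P u1 u2 ` B)"
proof -
  obtain Q a b where ab: "(a,b) \<noteq> (0,0)" and Be: "B = {hmult Q (s * a, s * b, 0) | s. s \<in> (UNIV :: real set)}"
    using B unfolding horiz_line_H_def by blast
  define a' where "a' = a*u1 + b*u2"
  define b' where "b' = b*u1 - a*u2"
  have "a'^2 + b'^2 = (a^2+b^2)*(u1^2+u2^2)" unfolding a'_def b'_def by (simp add: power2_eq_square algebra_simps)
  then have "a'^2 + b'^2 = a^2+b^2" using u by simp
  moreover have "a^2 + b^2 \<noteq> 0" using ab by simp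
  ultimately have ab': "(a',b') \<noteq> (0,0)" by auto
  have Be': "B = (\<lambda>s. hmult Q (s * a, s * b, 0)) ` UNIV" using Be by auto
  have "phi P u1 u2 ` B = (\<lambda>s. hmult (phi P u1 u2 Q) (s * a', s * b', 0)) ` UNIV"
    unfolding Be' image_image a'_def b'_def phi_hmult[OF u] ..
  also have "\<dots> = {hmult (phi P u1 u2 Q) (s * a', s * b', 0) | s. s \<in> (UNIV :: real set)}" by auto
  finally have "phi P u1 u2 ` B = {hmult (phi P u1 u2 Q) (s * a', s * b', 0) | s. s \<in> (UNIV :: real set)}" .
  then show ?thesis unfolding horiz_line_H_def using ab' by blast
qed

lemma psi_line: "psi P u1 u2 (s,0,c) = hmult (hmult P (0,0,c)) (s*u1, s*u2, 0)"
  by (cases P) (simp add: psi_def rotinv_simp hmult_simp algebra_simps)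

lemma psi_fst: "P = (p1,p2,p3) \<Longrightarrow> fst (psi P u1 u2 (s,0,c)) = p1 + s*u1 \<and> fst (snd (psi P u1 u2 (s,0,c))) = p2 + s*u2"
  by (simp add: psi_def rotinv_simp hmult_simp)



lemma num_basic:
  fixes M \<epsilon> N :: real
  assumes M1: "1 \<le> M" and e0: "0 < \<epsilon>" and e1: "\<epsilon> \<le> 1" and N: "N = 20000 * M^6 / \<epsilon>^2"
  shows "N \<ge> 20000" "N/M - 6/N - 2*M > 0" "1/N \<le> \<epsilon>/4" "1 \<le> N"
proof -
  have M0: "0 < M" using M1 by simp
  have M6: "1 \<le> M^6" using M1 by simp
  have e2: "\<epsilon>^2 \<le> 1" "0 < \<epsilon>^2" using e0 e1 by (simp_all add: power_le_one)
  have e2e: "\<epsilon>^2 \<le> \<epsilon>" using e0 e1 by (simp add: power2_eq_square mult_left_le)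
  have NM: "N \<ge> 20000 * M^6" unfolding N using e2 M6
    by (simp add: divide_simps) (simp add: mult_left_le)
  have N0: "N > 0" using NM M6 by linarith
  show N2: "N \<ge> 20000" using NM M6 by linarith
  then show "1 \<le> N" by simp
  have Mp: "M^2 \<le> M^6" using M1 by (simp add: power_increasing)
  have MN: "N \<le> M*N" using mult_right_mono[OF M1, of N] N0 by simp
  have MN2: "6 \<le> M*N" using MN N2 by linarith
  have invN: "6/N \<le> M" using N0 MN2 by (simp add: divide_simps)
  have NM2: "N \<ge> 6 * M^2" using NM Mp M6 by linarith
  have "N/(2*M) \<ge> 3*M" using NM2 M0 by (simp add: divide_simps power2_eq_square)
  moreover have "N/M = 2*(N/(2*M))" by simp
  moreover have "N/(2*M) > 0" using N0 M0 by simp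
  ultimately show "N/M - 6/N - 2*M > 0" using invN by linarith
  have "M^6 / N = \<epsilon>^2 / 20000" unfolding N using M6 e2 M0 by (simp add: field_simps)
  moreover have "1/N \<le> M^6/N" using M6 N0 by (simp add: divide_right_mono)
  ultimately show "1/N \<le> \<epsilon>/4" using e2e e2 by linarith
qed

lemma dpar_simp: "dpar (y,t) (\<xi>,\<tau>) = max \<bar>y - \<xi>\<bar> (sqrt \<bar>t - \<tau>\<bar>)"
  by (simp add: dpar_def)

lemma sqrt_le_r: assumes "\<bar>t\<bar> \<le> r^2" "0 \<le> r" shows "sqrt \<bar>t\<bar> \<le> r"
  using sqrt_le_iff2[of "\<bar>t\<bar>" r] assms by simp

lemma core:
  fixes g :: "wpl \<Rightarrow> heis" and M N r \<eta> \<epsilon> y0 \<tau>0 t :: real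
  assumes M1: "1 \<le> M" and e0: "0 < \<epsilon>" and e1: "\<epsilon> \<le> 1" and N: "N = 20000 * M^6 / \<epsilon>^2"
    and r: "0 < r" and eta: "\<eta> = r / N"
    and lip: "\<And>a b. hdist (g a) (g b) \<le> M * dpar a b"
    and colip: "\<And>a b. dpar a b \<le> M * hdist (g a) (g b)"
    and gw: "hnorm (g (y0,\<tau>0)) \<le> \<eta>"
    and A: "\<And>y. \<bar>y - y0\<bar> \<le> N*r \<Longrightarrow> \<exists>s. hdist (g (y,\<tau>0)) (s,0,0) \<le> \<eta>"
    and Bs: "\<bar>t - \<tau>0\<bar> \<le> r^2 \<Longrightarrow> \<exists>B. horiz_line_H B \<and> (\<forall>y. \<bar>y - y0\<bar> \<le> N*r \<longrightarrow> (\<exists>b\<in>B. hdist (g (y,t)) b \<le> \<eta>))"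
  shows "\<exists>c. \<forall>y. \<bar>y - y0\<bar> \<le> r \<longrightarrow> \<bar>t - \<tau>0\<bar> \<le> r^2 \<longrightarrow> (\<exists>s. hdist (g (y,t)) (s,0,c) \<le> \<epsilon>/2*r)"
proof (cases "\<bar>t - \<tau>0\<bar> \<le> r^2")
  case False
  then show ?thesis by blast
next
  case True
  note ht = True
  note nb = num_basic[OF M1 e0 e1 N]
  have N0: "N > 0" using nb by simp
  have M0: "M > 0" using M1 by simp
  have eta0: "\<eta> > 0" using eta N0 r by simp
  obtain B where hB: "horiz_line_H B" and HB: "\<And>y. \<bar>y - y0\<bar> \<le> N*r \<Longrightarrow> \<exists>b\<in>B. hdist (g (y,t)) b \<le> \<eta>"
    using Bs[OF ht] by blast
  have getb: "\<exists>X Y T. (X,Y,T) \<in> B \<and> hdist (g (y,t)) (X,Y,T) \<le> \<eta>" if yy: "\<bar>y - y0\<bar> \<le> N*r" for y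
  proof -
    obtain b where "b \<in> B" "hdist (g (y,t)) b \<le> \<eta>" using HB[OF yy] by blast
    then show ?thesis by (cases b) auto
  qed
  define d where "d = 2/N + M"
  define D where "D = d * r"
  have Deq: "D = 2*\<eta> + M*r" unfolding D_def d_def eta by (simp add: algebra_simps)
  have sq: "sqrt \<bar>t - \<tau>0\<bar> \<le> r" using sqrt_le_r[OF ht] r by simp
  have Nr: "r \<le> N*r" using nb r by simp
  have P1: "\<bar>Y\<bar> \<le> D \<and> \<bar>T - X*Y/2\<bar> \<le> 2*D^2"
    if y: "\<bar>y - y0\<bar> \<le> N*r" and b: "hdist (g (y,t)) (X,Y,T) \<le> \<eta>" for y X Y T
  proof -
    obtain s where s: "hdist (g (y,\<tau>0)) (s,0,0) \<le> \<eta>" using A[OF y] by blast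
    have "hdist (g (y,t)) (g (y,\<tau>0)) \<le> M * dpar (y,t) (y,\<tau>0)" by (rule lip)
    also have "dpar (y,t) (y,\<tau>0) = sqrt \<bar>t - \<tau>0\<bar>" by (simp add: dpar_simp)
    finally have gg: "hdist (g (y,t)) (g (y,\<tau>0)) \<le> M * r" using sq M0
      by (meson mult_left_mono less_imp_le order_trans)
    have "hdist (X,Y,T) (s,0,0) \<le> hdist (X,Y,T) (g (y,t)) + hdist (g (y,t)) (s,0,0)" by (rule hdist_triangle)
    also have "hdist (g (y,t)) (s,0,0) \<le> hdist (g (y,t)) (g (y,\<tau>0)) + hdist (g (y,\<tau>0)) (s,0,0)" by (rule hdist_triangle)
    finally have "hdist (X,Y,T) (s,0,0) \<le> D" using b s gg Deq hdist_sym[of "(X,Y,T)" "g (y,t)"] by linarith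
    then show ?thesis by (rule near_axis)
  qed
  have P2: "\<bar>X\<bar> \<le> 2*\<eta> + M * dpar (y,t) (y0,\<tau>0)"
    if b: "hdist (g (y,t)) (X,Y,T) \<le> \<eta>" for y X Y T
  proof -
    have "\<bar>X\<bar> \<le> hnorm (X,Y,T)" by (rule hnorm_x)
    also have "\<dots> = hdist (X,Y,T) (0,0,0)" by (simp add: hnorm_hdist0)
    also have "\<dots> \<le> hdist (X,Y,T) (g (y,t)) + hdist (g (y,t)) (0,0,0)" by (rule hdist_triangle)
    also have "hdist (g (y,t)) (0,0,0) \<le> hdist (g (y,t)) (g (y0,\<tau>0)) + hdist (g (y0,\<tau>0)) (0,0,0)" by (rule hdist_triangle)
    finally show ?thesis using b lip[of "(y,t)" "(y0,\<tau>0)"] gw hnorm_hdist0[of "g (y0,\<tau>0)"] hdist_sym[of "(X,Y,T)" "g (y,t)"]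
      by linarith
  qed
  define \<sigma> where "\<sigma> = N/M - 6/N - 2*M"
  define \<mu> where "\<mu> = 2/N + M*N"
  have sig0: "\<sigma> > 0" using nb \<sigma>_def by simp
  define y1 where "y1 = y0 - N*r"
  define y3 where "y3 = y0 + N*r"
  have yr: "\<bar>y1 - y0\<bar> \<le> N*r" "\<bar>y0 - y0\<bar> \<le> N*r" "\<bar>y3 - y0\<bar> \<le> N*r"
    using N0 r unfolding y1_def y3_def by (simp_all add: abs_if)
  obtain X1 Y1 T1 where b1: "(X1,Y1,T1) \<in> B" "hdist (g (y1,t)) (X1,Y1,T1) \<le> \<eta>" using getb[OF yr(1)] by blast
  obtain X2 Y2 T2 where b2: "(X2,Y2,T2) \<in> B" "hdist (g (y0,t)) (X2,Y2,T2) \<le> \<eta>" using getb[OF yr(2)] by blast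
  obtain X3 Y3 T3 where b3: "(X3,Y3,T3) \<in> B" "hdist (g (y3,t)) (X3,Y3,T3) \<le> \<eta>" using getb[OF yr(3)] by blast
  note q1 = P1[OF yr(1) b1(2)] and q2 = P1[OF yr(2) b2(2)] and q3 = P1[OF yr(3) b3(2)]
  have sep: "\<sigma> * r \<le> \<bar>Xa - Xb\<bar>"
    if a: "(Xa,Ya,Ta) \<in> B" "hdist (g (ya,t)) (Xa,Ya,Ta) \<le> \<eta>" "\<bar>Ya\<bar> \<le> D"
    and b: "(Xb,Yb,Tb) \<in> B" "hdist (g (yb,t)) (Xb,Yb,Tb) \<le> \<eta>" "\<bar>Yb\<bar> \<le> D"
    and yy: "N*r \<le> \<bar>ya - yb\<bar>" for Xa Ya Ta Xb Yb Tb ya yb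
  proof -
    have "N*r \<le> dpar (ya,t) (yb,t)" using yy by (simp add: dpar_simp)
    also have "\<dots> \<le> M * hdist (g (ya,t)) (g (yb,t))" by (rule colip)
    finally have "N*r/M \<le> hdist (g (ya,t)) (g (yb,t))" using M0 by (simp add: divide_simps mult.commute)
    moreover have "hdist (g (ya,t)) (g (yb,t)) \<le> hdist (g (ya,t)) (Xa,Ya,Ta) + hdist (Xa,Ya,Ta) (g (yb,t))"
      by (rule hdist_triangle)
    moreover have "hdist (Xa,Ya,Ta) (g (yb,t)) \<le> hdist (Xa,Ya,Ta) (Xb,Yb,Tb) + hdist (Xb,Yb,Tb) (g (yb,t))"
      by (rule hdist_triangle)
    moreover have "hdist (Xa,Ya,Ta) (Xb,Yb,Tb) \<le> \<bar>Xa - Xb\<bar> + \<bar>Ya - Yb\<bar>"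
      using horiz_line_dist[OF hB a(1) b(1)] by simp
    moreover have "\<bar>Ya - Yb\<bar> \<le> 2*D" using a(3) b(3) by linarith
    moreover have "hdist (Xb,Yb,Tb) (g (yb,t)) \<le> \<eta>" using b(2) hdist_sym by metis
    moreover have "\<sigma> * r = N*r/M - 2*\<eta> - 2*D"
      unfolding \<sigma>_def Deq eta using M0 N0 by (simp add: field_simps)
    ultimately show ?thesis using a(2) by linarith
  qed
  have s12: "\<sigma> * r \<le> \<bar>X1 - X2\<bar>" by (rule sep[OF b1 _ b2 _]) (use q1 q2 N0 r in \<open>simp_all add: y1_def\<close>)
  have s23: "\<sigma> * r \<le> \<bar>X2 - X3\<bar>" by (rule sep[OF b2 _ b3 _]) (use q2 q3 N0 r in \<open>simp_all add: y3_def\<close>)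
  have s31: "\<sigma> * r \<le> \<bar>X3 - X1\<bar>" by (rule sep[OF b3 _ b1 _]) (use q3 q1 N0 r in \<open>simp_all add: y3_def y1_def\<close>)
  have sr0: "\<sigma> * r > 0" using sig0 r by simp
  have "X1 \<noteq> X3" using s31 sr0 by auto
  then obtain m k \<alpha> where lin: "\<And>z. z \<in> B \<Longrightarrow> fst (snd z) = m * fst z + k \<and> snd (snd z) = \<alpha> - k * fst z / 2"
    using horiz_line_eq[OF hB b1(1) b3(1)] by auto
  have psi_eq: "T - X*Y/2 = \<alpha> - k*X - m*X^2/2 \<and> Y = m*X + k" if "(X,Y,T) \<in> B" for X Y T
  proof -
    have "Y = m*X + k" "T = \<alpha> - k*X/2" using lin[OF that] by simp_all
    then show ?thesis by (simp add: field_simps power2_eq_square)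
  qed
  have E1: "\<bar>\<alpha> - k*X1 - m*X1^2/2\<bar> \<le> 2*D^2"
  proof -
    have e: "T1 - X1*Y1/2 = \<alpha> - k*X1 - m*X1^2/2" using psi_eq[OF b1(1)] by blast
    show ?thesis using conjunct2[OF q1] unfolding e .
  qed
  have E2: "\<bar>\<alpha> - k*X2 - m*X2^2/2\<bar> \<le> 2*D^2"
  proof -
    have e: "T2 - X2*Y2/2 = \<alpha> - k*X2 - m*X2^2/2" using psi_eq[OF b2(1)] by blast
    show ?thesis using conjunct2[OF q2] unfolding e .
  qed
  have E3: "\<bar>\<alpha> - k*X3 - m*X3^2/2\<bar> \<le> 2*D^2"
  proof -
    have e: "T3 - X3*Y3/2 = \<alpha> - k*X3 - m*X3^2/2" using psi_eq[OF b3(1)] by blast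
    show ?thesis using conjunct2[OF q3] unfolding e .
  qed
  have dpN: "dpar (y,t) (y0,\<tau>0) \<le> N*r" if "\<bar>y - y0\<bar> \<le> N*r" for y
    using that sq Nr by (simp add: dpar_simp)
  have U: "\<bar>X1\<bar> \<le> \<mu> * r" "\<bar>X2\<bar> \<le> \<mu> * r"
  proof -
    have "\<mu> * r = 2*\<eta> + M * (N*r)" unfolding \<mu>_def eta using N0 by (simp add: field_simps)
    moreover have "M * dpar (y1,t) (y0,\<tau>0) \<le> M * (N*r)" "M * dpar (y0,t) (y0,\<tau>0) \<le> M * (N*r)"
      using dpN[OF yr(1)] dpN[OF yr(2)] M0 by (simp_all add: mult_left_mono)
    ultimately show "\<bar>X1\<bar> \<le> \<mu> * r" "\<bar>X2\<bar> \<le> \<mu> * r" using P2[OF b1(2)] P2[OF b2(2)] by linarith+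
  qed
  note qb = quad_bound[OF sr0 s12 s23 s31 E1 E2 E3 U]
  have hm: "\<bar>m\<bar> * \<sigma>^2 \<le> 12 * d^2"
  proof -
    have "(\<bar>m\<bar> * \<sigma>^2) * r^2 \<le> (12 * d^2) * r^2" using qb(1) unfolding D_def by (simp add: power_mult_distrib algebra_simps)
    then show ?thesis using r by simp
  qed
  have hk: "\<bar>k / r\<bar> \<le> 4 * d^2 / \<sigma> + \<bar>m\<bar> * \<mu>"
  proof -
    have "2 * (2 * D^2) / (\<sigma> * r) = (4 * d^2 / \<sigma>) * r" unfolding D_def using r sig0 by (simp add: field_simps power2_eq_square)
    then have "\<bar>k\<bar> \<le> (4 * d^2 / \<sigma> + \<bar>m\<bar> * \<mu>) * r" using qb(2) by (simp add: algebra_simps)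
    then have "\<bar>k\<bar> / r \<le> 4 * d^2 / \<sigma> + \<bar>m\<bar> * \<mu>" by (simp add: pos_divide_le_eq[OF r])
    moreover have "\<bar>r\<bar> = r" using r by simp
    ultimately show ?thesis by (simp add: abs_divide)
  qed
  show ?thesis
  proof (rule exI[of _ \<alpha>], intro allI impI)
    fix y assume y: "\<bar>y - y0\<bar> \<le> r" and "\<bar>t - \<tau>0\<bar> \<le> r^2"
    have yN: "\<bar>y - y0\<bar> \<le> N*r" using y Nr by linarith
    obtain X Y T where b: "(X,Y,T) \<in> B" "hdist (g (y,t)) (X,Y,T) \<le> \<eta>" using getb[OF yN] by blast
    have "dpar (y,t) (y0,\<tau>0) \<le> r" using y sq by (simp add: dpar_simp)
    then have "M * dpar (y,t) (y0,\<tau>0) \<le> M * r" using M0 by (simp add: mult_left_mono)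
    then have "\<bar>X\<bar> \<le> 2*\<eta> + M*r" using P2[OF b(2)] by linarith
    then have "\<bar>X\<bar> / r \<le> 2/N + M" using r N0 unfolding eta by (simp add: pos_divide_le_eq[OF r] algebra_simps)
    moreover have "\<bar>r\<bar> = r" using r by simp
    ultimately have hx: "\<bar>X / r\<bar> \<le> 2/N + M" by (simp add: abs_divide)
    note nm = numeric[OF M1 e0 e1 N d_def \<sigma>_def \<mu>_def hm hk hx]
    have pe: "T - X*Y/2 = \<alpha> - k*X - m*X^2/2" "Y = m*X + k" using psi_eq[OF b(1)] by blast+
    have Yr: "Y = r * (m * (X/r) + k/r)" using pe(2) r by (simp add: field_simps)
    have Tr: "T - \<alpha> - X*Y/2 = - (r^2 * (k/r * (X/r) + m * (X/r)^2 / 2))"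
    proof -
      have "r^2 * (k/r * (X/r) + m * (X/r)^2 / 2) = k*X + m*X^2/2" using r by (simp add: field_simps power2_eq_square)
      then show ?thesis using pe(1) by linarith
    qed
    have Yb: "\<bar>Y\<bar> \<le> \<epsilon>/4 * r" unfolding Yr abs_mult using nm(1) r by (simp add: mult.commute mult_left_mono)
    have Tb: "\<bar>T - \<alpha> - X*Y/2\<bar> \<le> (\<epsilon>/4 * r)^2"
    proof -
      have "\<bar>T - \<alpha> - X*Y/2\<bar> = r^2 * \<bar>k/r * (X/r) + m * (X/r)^2 / 2\<bar>"
        unfolding Tr abs_minus_cancel abs_mult by simp
      also have "\<dots> \<le> r^2 * (\<epsilon>/4)^2" by (rule mult_left_mono[OF nm(2)]) simp
      also have "\<dots> = (\<epsilon>/4 * r)^2" by (simp add: power2_eq_square)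
      finally show ?thesis .
    qed
    have "hdist (X,Y,T) (X,0,\<alpha>) = hnorm (0, Y, T - \<alpha> - X*Y/2)" by (simp add: hdist_simp)
    also have "\<dots> \<le> \<epsilon>/4 * r" unfolding hnorm_le using Yb Tb e0 r
      by (simp add: power2_le_iff_abs_le)
    finally have h1: "hdist (X,Y,T) (X,0,\<alpha>) \<le> \<epsilon>/4 * r" .
    have "hdist (g (y,t)) (X,0,\<alpha>) \<le> hdist (g (y,t)) (X,Y,T) + hdist (X,Y,T) (X,0,\<alpha>)" by (rule hdist_triangle)
    moreover have "\<eta> \<le> \<epsilon>/4 * r" unfolding eta using nb(3) r by (simp add: mult_right_mono divide_simps)
    ultimately have "hdist (g (y,t)) (X,0,\<alpha>) \<le> \<epsilon>/2 * r" using b(2) h1 by linarith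
    then show "\<exists>s. hdist (g (y,t)) (s,0,\<alpha>) \<le> \<epsilon>/2 * r" by blast
  qed
qed



lemma hmult_zero: "hmult p (0,0,0) = p" by (cases p) (simp add: hmult_simp)

lemma in_nbhd: assumes "q \<in> L" "hdist p q \<le> e" shows "p \<in> hnbhd L e"
proof -
  have "bdd_below (hdist p ` L)" by (rule bdd_belowI[of _ 0]) (auto simp: hdist_nonneg)
  then have "Inf (hdist p ` L) \<le> hdist p q" using assms(1) by (simp add: cInf_lower)
  then show ?thesis using assms(2) unfolding hnbhd_def hsetdist_def by simp
qed

lemma near_pt: assumes "p \<in> hnbhd L e" "L \<noteq> {}" "e < e'" shows "\<exists>q\<in>L. hdist p q < e'"
proof -
  have "Inf (hdist p ` L) < e'" using assms unfolding hnbhd_def hsetdist_def by simp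
  then obtain x where "x \<in> hdist p ` L" "x < e'" using cInf_lessD[of "hdist p ` L" e'] assms(2) by blast
  then show ?thesis by blast
qed

lemma horiz_ne: "horiz_line_H L \<Longrightarrow> L \<noteq> {}"
  unfolding horiz_line_H_def by blast

lemma hline_shift: "hmult (hmult P0 (s0*a, s0*b, 0)) ((s-s0)*a, (s-s0)*b, 0) = hmult P0 (s*a, s*b, 0)"
  by (cases P0) (simp add: hmult_simp field_simps)

lemma wball_mem: "(y,t) \<in> wball (y0,\<tau>0) R \<longleftrightarrow> max \<bar>y0 - y\<bar> (sqrt \<bar>\<tau>0 - t\<bar>) \<le> R"
  by (simp add: wball_def dpar_simp)

lemma dpar_sym: "dpar a b = dpar b a"
  by (cases a, cases b) (simp add: dpar_simp abs_minus_commute)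

lemma main_step:
  fixes M \<epsilon> N r :: real and f :: "wpl \<Rightarrow> heis" and w :: wpl
  assumes M1: "1 \<le> M" and e0: "0 < \<epsilon>" and e1: "\<epsilon> \<le> 1" and N: "N = 20000 * M^6 / \<epsilon>^2"
    and bil: "bilipschitz M f" and r: "0 < r" and rc: "ruler_coeff f w (N * r) < 1 / N^2"
  shows "beta f w r < \<epsilon>"
proof -
  note nb = num_basic[OF M1 e0 e1 N]
  have N0: "N > 0" using nb by simp
  have M0: "M > 0" using M1 by simp
  obtain y0 \<tau>0 where w: "w = (y0, \<tau>0)" by (cases w) auto
  have lip: "\<And>a b. hdist (f a) (f b) \<le> M * dpar a b" using bil unfolding bilipschitz_def by blast
  have colip: "\<And>a b. dpar a b \<le> M * hdist (f a) (f b)"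
  proof -
    fix a b
    have "dpar a b / M \<le> hdist (f a) (f b)" using bil unfolding bilipschitz_def by blast
    then show "dpar a b \<le> M * hdist (f a) (f b)" using M0 by (simp add: divide_simps mult.commute)
  qed
  define \<eta> where "\<eta> = r / N"
  have eta0: "\<eta> > 0" using r N0 \<eta>_def by simp
  define R where "R = {\<rho>. \<rho> > 0 \<and> (\<forall>l. horiz_line_W l \<longrightarrow>
      (\<exists>L. horiz_line_H L \<and> f ` (l \<inter> wball w (N*r)) \<subseteq> hnbhd L (\<rho> * (N*r))))}"
  have MR: "M \<in> R"
  proof -
    define L0 where "L0 = {hmult (f w) (s * 1, s * 0, 0) | s. s \<in> (UNIV :: real set)}"
    have hL0: "horiz_line_H L0" unfolding L0_def horiz_line_H_def
      by (rule exI[of _ "f w"], rule exI[of _ 1], rule exI[of _ 0]) simp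
    have "f w = hmult (f w) (0 * 1, 0 * 0, 0)" using hmult_zero[of "f w"] by simp
    then have fwL: "f w \<in> L0" unfolding L0_def by blast
    have "f ` (l \<inter> wball w (N*r)) \<subseteq> hnbhd L0 (M * (N*r))" for l
    proof
      fix p assume "p \<in> f ` (l \<inter> wball w (N*r))"
      then obtain z where z: "z \<in> wball w (N*r)" "p = f z" by blast
      have "dpar z w \<le> N*r" using z(1) dpar_sym unfolding wball_def by simp
      then have "hdist (f z) (f w) \<le> M * (N*r)" using lip[of z w] M0 by (meson mult_left_mono less_imp_le order_trans)
      then show "p \<in> hnbhd L0 (M * (N*r))" using in_nbhd[OF fwL] z(2) by simp
    qed
    then show ?thesis unfolding R_def using hL0 M0 by blast
  qed
  have "Inf R < 1 / N^2" using rc unfolding ruler_coeff_def R_def by simp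
  then obtain \<rho> where \<rho>: "\<rho> \<in> R" "\<rho> < 1 / N^2" using cInf_lessD[of R] MR by blast
  have \<rho>\<eta>: "\<rho> * (N*r) < \<eta>"
  proof -
    have "\<rho> * (N*r) < (1/N^2) * (N*r)" using mult_strict_right_mono[OF \<rho>(2), of "N*r"] N0 r by simp
    also have "\<dots> = \<eta>" unfolding \<eta>_def using N0 by (simp add: power2_eq_square)
    finally show ?thesis .
  qed
  have HR: "\<exists>L. horiz_line_H L \<and> (\<forall>y. \<bar>y - y0\<bar> \<le> N*r \<and> sqrt \<bar>\<tau>0 - t\<bar> \<le> N*r \<longrightarrow> (\<exists>q\<in>L. hdist (f (y,t)) q < \<eta>))" for t
  proof -
    have "horiz_line_W (UNIV \<times> {t})" unfolding horiz_line_W_def by blast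
    then obtain L where L: "horiz_line_H L" "f ` ((UNIV \<times> {t}) \<inter> wball w (N*r)) \<subseteq> hnbhd L (\<rho> * (N*r))"
      using \<rho>(1) unfolding R_def by blast
    have "\<exists>q\<in>L. hdist (f (y,t)) q < \<eta>" if y: "\<bar>y - y0\<bar> \<le> N*r \<and> sqrt \<bar>\<tau>0 - t\<bar> \<le> N*r" for y
    proof -
      have "(y,t) \<in> (UNIV \<times> {t}) \<inter> wball w (N*r)" using y unfolding w by (simp add: wball_mem abs_minus_commute)
      then have "f (y,t) \<in> hnbhd L (\<rho> * (N*r))" using L(2) by blast
      then show ?thesis using near_pt horiz_ne[OF L(1)] \<rho>\<eta> by blast
    qed
    then show ?thesis using L(1) by blast
  qed
  obtain A where hA: "horiz_line_H A" and HA: "\<And>y. \<bar>y - y0\<bar> \<le> N*r \<and> sqrt \<bar>\<tau>0 - \<tau>0\<bar> \<le> N*r \<Longrightarrow> \<exists>q\<in>A. hdist (f (y,\<tau>0)) q < \<eta>"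
    using HR[of \<tau>0] by blast
  obtain P0 a b where ab: "(a,b) \<noteq> (0,0)" and Ae: "A = {hmult P0 (s * a, s * b, 0) | s. s \<in> (UNIV :: real set)}"
    using hA unfolding horiz_line_H_def by blast
  have "\<exists>q\<in>A. hdist (f (y0,\<tau>0)) q < \<eta>" using HA[of y0] N0 r by simp
  then obtain s0 where s0: "hdist (f w) (hmult P0 (s0 * a, s0 * b, 0)) < \<eta>" using Ae w by auto
  define P where "P = hmult P0 (s0 * a, s0 * b, 0)"
  define n where "n = sqrt (a^2 + b^2)"
  have n0: "n > 0" unfolding n_def using ab sum_power2_gt_zero_iff[of a b] by auto
  define u1 where "u1 = a / n"
  define u2 where "u2 = b / n"
  have u: "u1^2 + u2^2 = 1"
  proof -
    have "n^2 = a^2 + b^2" unfolding n_def by simp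
    moreover have "u1^2+u2^2 = (a^2+b^2)/n^2" unfolding u1_def u2_def by (simp add: power_divide add_divide_distrib)
    ultimately show ?thesis using n0 ab by simp
  qed
  have u0: "(u1, u2) \<noteq> (0,0)" using u by auto
  have Apsi: "hmult P0 (s * a, s * b, 0) = psi P u1 u2 ((s - s0) * n, 0, 0)" for s
  proof -
    have "psi P u1 u2 ((s - s0) * n, 0, 0) = hmult P ((s - s0) * a, (s - s0) * b, 0)"
      unfolding psi_def rotinv_simp u1_def u2_def using n0 by simp
    then show ?thesis unfolding P_def hline_shift by simp
  qed
  define g where "g = (\<lambda>z. phi P u1 u2 (f z))"
  have gd: "hdist (g a) (g b) = hdist (f a) (f b)" for a b unfolding g_def using hdist_phi[OF u] by simp
  have fpsi: "hdist (g z) x = hdist (f z) (psi P u1 u2 x)" for z x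
    unfolding g_def using hdist_phi[OF u, of P "f z" "psi P u1 u2 x"] phi_psi[OF u] by simp
  have glip: "\<And>a b. hdist (g a) (g b) \<le> M * dpar a b" using lip gd by simp
  have gcolip: "\<And>a b. dpar a b \<le> M * hdist (g a) (g b)" using colip gd by simp
  have gw: "hnorm (g (y0,\<tau>0)) \<le> \<eta>"
  proof -
    have "hnorm (g (y0,\<tau>0)) = hdist (g w) (phi P u1 u2 P)" using w phi_P hnorm_hdist0 by simp
    also have "\<dots> = hdist (f w) P" unfolding g_def using hdist_phi[OF u] by simp
    finally show ?thesis using s0 P_def by simp
  qed
  have gA: "\<exists>s. hdist (g (y,\<tau>0)) (s,0,0) \<le> \<eta>" if y: "\<bar>y - y0\<bar> \<le> N*r" for y
  proof -
    have "\<exists>q\<in>A. hdist (f (y,\<tau>0)) q < \<eta>" using HA[of y] y N0 r by simp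
    then obtain s where "hdist (f (y,\<tau>0)) (hmult P0 (s * a, s * b, 0)) < \<eta>" using Ae by auto
    then have "hdist (g (y,\<tau>0)) ((s - s0) * n, 0, 0) < \<eta>" unfolding fpsi Apsi .
    then show ?thesis by (meson less_imp_le)
  qed
  have gB: "\<exists>B. horiz_line_H B \<and> (\<forall>y. \<bar>y - y0\<bar> \<le> N*r \<longrightarrow> (\<exists>b\<in>B. hdist (g (y,t)) b \<le> \<eta>))"
    if t: "\<bar>t - \<tau>0\<bar> \<le> r^2" for t
  proof -
    obtain L where L: "horiz_line_H L" "\<And>y. \<bar>y - y0\<bar> \<le> N*r \<and> sqrt \<bar>\<tau>0 - t\<bar> \<le> N*r \<Longrightarrow> \<exists>q\<in>L. hdist (f (y,t)) q < \<eta>"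
      using HR[of t] by blast
    have sq: "sqrt \<bar>\<tau>0 - t\<bar> \<le> N*r"
    proof -
      have "sqrt \<bar>\<tau>0 - t\<bar> \<le> r" using sqrt_le_r[of "\<tau>0 - t" r] t r by (simp add: abs_minus_commute)
      also have "r \<le> N*r" using nb r by simp
      finally show ?thesis .
    qed
    have "\<exists>b\<in>phi P u1 u2 ` L. hdist (g (y,t)) b \<le> \<eta>" if y: "\<bar>y - y0\<bar> \<le> N*r" for y
    proof -
      obtain q where q: "q \<in> L" "hdist (f (y,t)) q < \<eta>" using L(2)[of y] y sq by blast
      have "hdist (g (y,t)) (phi P u1 u2 q) = hdist (f (y,t)) q" unfolding g_def using hdist_phi[OF u] by simp
      then show ?thesis using q by force
    qed
    then show ?thesis using phi_line[OF u L(1)] by blast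
  qed
  have cores: "\<exists>c. \<forall>y. \<bar>y - y0\<bar> \<le> r \<longrightarrow> \<bar>t - \<tau>0\<bar> \<le> r^2 \<longrightarrow> (\<exists>s. hdist (g (y,t)) (s,0,c) \<le> \<epsilon>/2*r)" for t
    by (rule core[OF M1 e0 e1 N r \<eta>_def glip gcolip gw gA gB])
  obtain p1 p2 p3 where P: "P = (p1,p2,p3)" by (cases P) auto
  define V :: "heis set" where "V = {(x,y,t). (x,y) \<in> {(p1 + s * u1, p2 + s * u2) | s. s \<in> (UNIV :: real set)}}"
  have hV: "vertical_plane V" unfolding vertical_plane_def V_def using u0
    by (intro exI[of _ p1] exI[of _ p2] exI[of _ u1] exI[of _ u2]) simp
  define S where "S = {e. e > 0 \<and> (\<forall>l. horiz_line_W l \<longrightarrow>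
      (\<exists>L. horiz_line_H L \<and> L \<subseteq> V \<and> f ` (l \<inter> wball w r) \<subseteq> hnbhd L (e * r)))}"
  have eS: "\<epsilon>/2 \<in> S"
  proof -
    have "\<exists>L. horiz_line_H L \<and> L \<subseteq> V \<and> f ` (l \<inter> wball w r) \<subseteq> hnbhd L (\<epsilon>/2 * r)"
      if l: "horiz_line_W l" for l
    proof -
      obtain t where lt: "l = UNIV \<times> {t}" using l unfolding horiz_line_W_def by blast
      obtain c where c: "\<And>y. \<bar>y - y0\<bar> \<le> r \<Longrightarrow> \<bar>t - \<tau>0\<bar> \<le> r^2 \<Longrightarrow> \<exists>s. hdist (g (y,t)) (s,0,c) \<le> \<epsilon>/2*r"
        using cores[of t] by blast
      define L where "L = {psi P u1 u2 (s,0,c) | s. s \<in> (UNIV :: real set)}"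
      have "L = {hmult (hmult P (0,0,c)) (s*u1, s*u2, 0) | s. s \<in> (UNIV :: real set)}"
        unfolding L_def psi_line ..
      then have hL: "horiz_line_H L" unfolding horiz_line_H_def using u0
        by (intro exI[of _ "hmult P (0,0,c)"] exI[of _ u1] exI[of _ u2]) simp
      have LV: "L \<subseteq> V"
      proof
        fix x assume "x \<in> L"
        then obtain s where x: "x = psi P u1 u2 (s,0,c)" unfolding L_def by blast
        have "fst x = p1 + s*u1" "fst (snd x) = p2 + s*u2" using psi_fst[OF P] x by simp_all
        then show "x \<in> V" unfolding V_def by (cases x) auto
      qed
      have "f ` (l \<inter> wball w r) \<subseteq> hnbhd L (\<epsilon>/2 * r)"
      proof
        fix p assume "p \<in> f ` (l \<inter> wball w r)"
        then obtain y where yb: "(y,t) \<in> wball w r" and p: "p = f (y,t)" unfolding lt by blast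
        have yy: "\<bar>y0 - y\<bar> \<le> r" "sqrt \<bar>\<tau>0 - t\<bar> \<le> r" using yb unfolding w wball_mem by simp_all
        have "\<bar>\<tau>0 - t\<bar> \<le> r^2" using yy(2) sqrt_le_iff2[of "\<bar>\<tau>0 - t\<bar>" r] by simp
        then obtain s where s: "hdist (g (y,t)) (s,0,c) \<le> \<epsilon>/2*r" using c[of y] yy(1)
          by (auto simp: abs_minus_commute)
        have "psi P u1 u2 (s,0,c) \<in> L" unfolding L_def by blast
        moreover have "hdist (f (y,t)) (psi P u1 u2 (s,0,c)) \<le> \<epsilon>/2*r" using s fpsi by simp
        ultimately show "p \<in> hnbhd L (\<epsilon>/2 * r)" using in_nbhd p by simp
      qed
      then show ?thesis using hL LV by blast
    qed
    then show ?thesis unfolding S_def using e0 by simp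
  qed
  have bp: "beta_plane f V w r \<le> \<epsilon>/2"
  proof -
    have "bdd_below S" unfolding S_def by (rule bdd_belowI[of _ 0]) auto
    then have "Inf S \<le> \<epsilon>/2" using cInf_lower[OF eS] by blast
    then show ?thesis unfolding beta_plane_def S_def by simp
  qed
  have bdd: "bdd_below {beta_plane f V w r | V. vertical_plane V}"
  proof (rule bdd_belowI[of _ "min 0 (Inf ({} :: real set))"])
    fix x assume "x \<in> {beta_plane f V w r | V. vertical_plane V}"
    then obtain V' where x: "x = beta_plane f V' w r" by blast
    define S' where "S' = {e. e > 0 \<and> (\<forall>l. horiz_line_W l \<longrightarrow>
      (\<exists>L. horiz_line_H L \<and> L \<subseteq> V' \<and> f ` (l \<inter> wball w r) \<subseteq> hnbhd L (e * r)))}"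
    have xS: "x = Inf S'" unfolding x beta_plane_def S'_def ..
    show "min 0 (Inf ({} :: real set)) \<le> x"
    proof (cases "S' = {}")
      case True
      then show ?thesis using xS by simp
    next
      case False
      have "0 \<le> Inf S'" by (rule cInf_greatest[OF False]) (auto simp: S'_def)
      then show ?thesis using xS by simp
    qed
  qed
  have "beta f w r \<le> beta_plane f V w r"
    unfolding beta_def by (rule cInf_lower) (use hV bdd in auto)
  then show ?thesis using bp e0 by simp
qed


theorem proposition4p6:
  fixes M :: real
  assumes "M \<ge> 1"
  shows "\<forall>\<epsilon>. 0 < \<epsilon> \<and> \<epsilon> \<le> 1 \<longrightarrow>
    (\<exists>C \<ge> 10. \<exists>\<delta> > 0. \<forall>f. bilipschitz M f \<longrightarrow>
      (\<forall>w r. r > 0 \<longrightarrow> ruler_coeff f w (C * r) < \<delta> \<longrightarrow> beta f w r < \<epsilon>))"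
proof (intro allI impI)
  fix \<epsilon> :: real assume e: "0 < \<epsilon> \<and> \<epsilon> \<le> 1"
  define N where "N = 20000 * M^6 / \<epsilon>^2"
  have nb: "N \<ge> 20000" using num_basic[OF assms _ _ N_def] e by blast
  then have C: "N \<ge> 10" by simp
  have d: "1 / N^2 > 0" using nb by simp
  have "\<forall>f. bilipschitz M f \<longrightarrow> (\<forall>w r. r > 0 \<longrightarrow> ruler_coeff f w (N * r) < 1 / N^2 \<longrightarrow> beta f w r < \<epsilon>)"
    using main_step[OF assms _ _ N_def] e by blast
  then show "\<exists>C \<ge> 10. \<exists>\<delta> > 0. \<forall>f. bilipschitz M f \<longrightarrow>
      (\<forall>w r. r > 0 \<longrightarrow> ruler_coeff f w (C * r) < \<delta> \<longrightarrow> beta f w r < \<epsilon>)"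
    using C d by blast
qed

end
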